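(* Let $\lambda\ge\omega_3$ be a cardinal, $F:[\lambda]^2\to\omega_1$ any function, and $\mathcal P=\langle P,\le\rangle$ the forcing poset defined in the context. Then: (a) If $p=\langle X,\preceq,i\rangle\in P$ and $t\in T\setminus X$, then there is $p'=\langle X',\preceq',i'\rangle\in P$ with $p'\le p$ and $t\in X'$. (b) If $p=\langle X,\preceq,i\rangle\in P$, $t\in X$, $\alpha<\min\{\pi(t),\omega_1\}$ and $n<\omega$, then there are $p'=\langle X',\preceq',i'\rangle\in P$ with $p'\le p$ and $s\in X'\setminus X$ with $\pi(s)=\alpha$ and $\rho(s)>n$ such that for every $x\in X$: $s\preceq' x$ iff $t\preceq x$.
   Context: For $s=\langle\alpha,\zeta\rangle$ write $\pi(s)=\alpha$, $\rho(s)=\zeta$. Let $T=(\omega_1\times\omega)\cup(\{\omega_1,\omega_1+1\}\times\lambda)$, with $T_\alpha=\{\alpha\}\times\omega$ for $\alpha<\omega_1$, $T_{\omega_1}=\{\omega_1\}\times\lambda$, $T_{\omega_1+1}=\{\omega_1+1\}\times\lambda$, and $t_\xi=\langle\omega_1+1,\xi\rangle$ for $\xi<\lambda$. Let $\mathbb B=\{S\}\cup\lambda$ (where $S$ is a new symbol), $\mathbb B_S=\omega_1\times\omega$ and $\mathbb B_\zeta=\{\omega_1\}\times[\omega\cdot\zeta,\omega\cdot\zeta+\omega)\cup\{t_\zeta\}$ for $\zeta<\lambda$; these partition $T$, and $\pi_B:T\to\mathbb B$ is defined by $x\in\mathbb B_{\pi_B(x)}$. $P$ consists of all triples $p=\langle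 X,\preceq,i\rangle$ such that: (P1) $X\in[T]^{<\omega}$; (P2) $\preceq$ is a partial order on $X$ such that $x\prec y$ implies $\pi(x)<\pi(y)$; (P3) if $X\cap\mathbb B_\zeta\ne\emptyset$ for some $\zeta<\lambda$, then $t_\zeta\in X$; (P4) if $x\in X\cap T_{\omega_1}\cap\mathbb B_\zeta$ for $\zeta<\lambda$, then $x\prec t_\zeta$ and $x\not\prec t_\xi$ for all $\xi\ne\zeta$ (with $t_\xi\in X$); (P5) if $s\neq t$ lie in the same $\mathbb B_b$ ($b\in\mathbb B$) with $\pi(s)=\pi(t)$, then $i\{s,t\}=\emptyset$; (P6) if $t\in X\cap T_{\alpha+1}$ for some $\alpha\le\omega_1$ and $s\prec t$, then there is $v\in X\cap T_\alpha$ with $s\preceq v\prec t$; (P7) $i:[X]^2\to[X]^{<\omega}$ satisfies $i\{x,y\}=\{x\}$ whenever $x\prec y$, and whenever $x,y\in X$ are $\preceq$-incomparable: (a) for all $u\in X$, ($u\preceq x$ and $u\preceq y$) iff $u\preceq v$ for some $v\in i\{x,y\}$; (b) if $x,y\in T_{\omega_1}\cup T_{\omega_1+1}$ and $\pi_B(x)\ne\pi_B(y)$, then $\pi[i\{x,y\}]\subseteq F\{\pi_B(x),\pi_B(y)\}$ (the ordinal $F\{\cdot,\cdot\}<\omega_1$ viewed as the set of smaller ordinals). Order: $\langle X',\preceq',i'\rangle\le\langle X,\preceq,i\rangle$ iff $X\subseteq X'$, $\preceq=\preceq'\cap(X\times X)$, and $i\subseteq i'$. *)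

theory Defs
  imports Main "HOL-Library.Countable_Set"
begin

text \<open>
  The ordinal omega_1 is represented by a type 'w of class wellorder that is
  uncountable and all of whose proper initial segments are countable (this
  characterises the order type omega_1).  The cardinal lambda is represented
  by a type 'k (of cardinality lambda).  Nodes of T:
    Low a n   =  <a, n>            (a < omega_1, n < omega)
    Mid z k   =  <omega_1, omega*z + k>   (z < lambda, k < omega)
    Top z     =  <omega_1 + 1, z> = t_z   (z < lambda)
  Since lambda is infinite, every eta < lambda is uniquely omega*z + k, so
  Mid is a bijective parametrisation of T_{omega_1}.
\<close>

datatype ('w, 'k) node = Low 'w nat | Mid 'k nat | Top 'k

text \<open>Levels: ordinals up to omega_1 + 1.\<close>
datatype 'w lev = Lv 'w | LW1 | LW1s

fun lev_less :: "'w::wellorder lev \<Rightarrow> 'w lev \<Rightarrow> bool" where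
  "lev_less (Lv a) (Lv b) = (a < b)"
| "lev_less (Lv a) LW1 = True"
| "lev_less (Lv a) LW1s = True"
| "lev_less LW1 LW1s = True"
| "lev_less _ _ = False"

fun lev_succ :: "'w::wellorder lev \<Rightarrow> 'w lev \<Rightarrow> bool" where
  "lev_succ (Lv a) (Lv b) = (a < b \<and> \<not> (\<exists>c. a < c \<and> c < b))"
| "lev_succ LW1 LW1s = True"
| "lev_succ _ _ = False"

fun pi :: "('w, 'k) node \<Rightarrow> 'w lev" where
  "pi (Low a n) = Lv a"
| "pi (Mid z k) = LW1"
| "pi (Top z) = LW1s"

text \<open>The blocks: S (= omega_1 x omega) and B_z for z < lambda.\<close>
datatype 'k blk = S | B 'k

fun piB :: "('w, 'k) node \<Rightarrow> 'k blk" where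
  "piB (Low a n) = S"
| "piB (Mid z k) = B z"
| "piB (Top z) = B z"

definition strict :: "'n rel \<Rightarrow> 'n \<Rightarrow> 'n \<Rightarrow> bool" where
  "strict R x y \<longleftrightarrow> (x, y) \<in> R \<and> x \<noteq> y"

text \<open>Membership in P.  The function i : [X]^2 -> [X]^{<omega} is represented
  by a total function on sets, only its values on 2-element subsets of X matter.\<close>
definition inP :: "('k set \<Rightarrow> 'w::wellorder) \<Rightarrow>
    ('w, 'k) node set \<Rightarrow> ('w, 'k) node rel \<Rightarrow> (('w, 'k) node set \<Rightarrow> ('w, 'k) node set) \<Rightarrow> bool"
  where
  "inP F X R i \<longleftrightarrow>
     \<comment> \<open>(P1)\<close>
     finite X
     \<comment> \<open>(P2)\<close>
   \<and> partial_order_on X R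
   \<and> (\<forall>x y. strict R x y \<longrightarrow> lev_less (pi x) (pi y))
     \<comment> \<open>(P3)\<close>
   \<and> (\<forall>z. (\<exists>x\<in>X. piB x = B z) \<longrightarrow> Top z \<in> X)
     \<comment> \<open>(P4)\<close>
   \<and> (\<forall>z k. Mid z k \<in> X \<longrightarrow>
        strict R (Mid z k) (Top z) \<and> (\<forall>z'. z' \<noteq> z \<and> Top z' \<in> X \<longrightarrow> \<not> strict R (Mid z k) (Top z')))
     \<comment> \<open>(P5)\<close>
   \<and> (\<forall>s\<in>X. \<forall>t\<in>X. s \<noteq> t \<and> piB s = piB t \<and> pi s = pi t \<longrightarrow> i {s, t} = {})
     \<comment> \<open>(P6)\<close>
   \<and> (\<forall>t\<in>X. \<forall>s. \<forall>a. lev_succ a (pi t) \<and> strict R s t \<longrightarrow>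
        (\<exists>v\<in>X. pi v = a \<and> (s, v) \<in> R \<and> strict R v t))
     \<comment> \<open>(P7)\<close>
   \<and> (\<forall>x\<in>X. \<forall>y\<in>X. x \<noteq> y \<longrightarrow> i {x, y} \<subseteq> X \<and> finite (i {x, y}))
   \<and> (\<forall>x y. strict R x y \<longrightarrow> i {x, y} = {x})
   \<and> (\<forall>x\<in>X. \<forall>y\<in>X. (x, y) \<notin> R \<and> (y, x) \<notin> R \<longrightarrow>
        (\<forall>u\<in>X. ((u, x) \<in> R \<and> (u, y) \<in> R) \<longleftrightarrow> (\<exists>v\<in>i {x, y}. (u, v) \<in> R))
      \<and> ((\<exists>zx zy. piB x = B zx \<and> piB y = B zy \<and> zx \<noteq> zy \<and>
            pi x \<in> {LW1, LW1s} \<and> pi y \<in> {LW1, LW1s}) \<longrightarrow>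
          (\<forall>v\<in>i {x, y}. \<forall>zx zy. piB x = B zx \<and> piB y = B zy \<longrightarrow>
              lev_less (pi v) (Lv (F {zx, zy})))))"

definition leP :: "('n set \<times> 'n rel \<times> ('n set \<Rightarrow> 'n set)) \<Rightarrow>
                   ('n set \<times> 'n rel \<times> ('n set \<Rightarrow> 'n set)) \<Rightarrow> bool" where
  "leP p' p \<longleftrightarrow> (case p' of (X', R', i') \<Rightarrow> case p of (X, R, i) \<Rightarrow>
      X \<subseteq> X' \<and> R = R' \<inter> (X \<times> X) \<and> (\<forall>x\<in>X. \<forall>y\<in>X. x \<noteq> y \<longrightarrow> i' {x, y} = i {x, y}))"

end

theory Submission
  imports Defs
begin

lemma lev_less_trans: "lev_less a b \<Longrightarrow> lev_less b c \<Longrightarrow> lev_less a c"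
  by (cases a; cases b; cases c) auto
lemma lev_less_irr: "\<not> lev_less a a"
  by (cases a) auto
lemma lev_succ_less: "lev_succ a b \<Longrightarrow> lev_less a b"
  by (cases a; cases b) auto
lemma lev_succ_uniq: "lev_succ a c \<Longrightarrow> lev_succ b c \<Longrightarrow> a = b"
  apply (cases a; cases b; cases c; auto)
  using not_less_iff_gr_or_eq by blast


lemma step:
  assumes P: "inP F X R i" and tX: "t \<in> X" and nX: "nw \<notin> X"
    and lt: "lev_less (pi nw) (pi t)"
    and succ: "lev_succ (pi nw) (pi t) \<or> (\<forall>d. \<not> lev_succ d (pi t))"
    and mid: "\<forall>z k. nw = Mid z k \<longrightarrow> t = Top z"
  defines "X' \<equiv> insert nw X"
    and "R' \<equiv> R \<union> {(nw,nw)} \<union> {(nw,x)| x. (t,x) \<in> R}"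
    and "i' \<equiv> \<lambda>S. if S \<subseteq> X then i S else if (\<exists>x. (t,x) \<in> R \<and> S = {nw,x}) then {nw} else {}"
  shows "inP F X' R' i' \<and> leP (X',R',i') (X,R,i) \<and> (\<forall>x\<in>X. (nw,x) \<in> R' \<longleftrightarrow> (t,x) \<in> R)"
proof -
  note Pc = P[unfolded inP_def]
  note q1 = Pc[THEN conjunct1]
  note q2 = Pc[THEN conjunct2, THEN conjunct1]
  note q3 = Pc[THEN conjunct2, THEN conjunct2, THEN conjunct1]
  note q4 = Pc[THEN conjunct2, THEN conjunct2, THEN conjunct2, THEN conjunct1]
  note q5 = Pc[THEN conjunct2, THEN conjunct2, THEN conjunct2, THEN conjunct2, THEN conjunct1]
  note q6 = Pc[THEN conjunct2, THEN conjunct2, THEN conjunct2, THEN conjunct2, THEN conjunct2, THEN conjunct1]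
  note q7 = Pc[THEN conjunct2, THEN conjunct2, THEN conjunct2, THEN conjunct2, THEN conjunct2, THEN conjunct2, THEN conjunct1]
  note q8 = Pc[THEN conjunct2, THEN conjunct2, THEN conjunct2, THEN conjunct2, THEN conjunct2, THEN conjunct2, THEN conjunct2, THEN conjunct1]
  note q9 = Pc[THEN conjunct2, THEN conjunct2, THEN conjunct2, THEN conjunct2, THEN conjunct2, THEN conjunct2, THEN conjunct2, THEN conjunct2, THEN conjunct1]
  note q10 = Pc[THEN conjunct2, THEN conjunct2, THEN conjunct2, THEN conjunct2, THEN conjunct2, THEN conjunct2, THEN conjunct2, THEN conjunct2, THEN conjunct2]
  have fin: "finite X" by (rule q1)
  have po: "partial_order_on X R" by (rule q2)
  have RX: "R \<subseteq> X \<times> X" using po unfolding partial_order_on_def preorder_on_def by blast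
  have refl: "\<And>x. x \<in> X \<Longrightarrow> (x,x) \<in> R" using po unfolding partial_order_on_def preorder_on_def refl_on_def by blast
  have tr: "\<And>x y z. (x,y) \<in> R \<Longrightarrow> (y,z) \<in> R \<Longrightarrow> (x,z) \<in> R" using po unfolding partial_order_on_def preorder_on_def trans_def by blast
  have an: "\<And>x y. (x,y) \<in> R \<Longrightarrow> (y,x) \<in> R \<Longrightarrow> x = y" using po unfolding partial_order_on_def antisym_def by blast
  have sl: "\<And>x y. strict R x y \<Longrightarrow> lev_less (pi x) (pi y)" using q3 by blast
  have p3: "\<And>z. (\<exists>x\<in>X. piB x = B z) \<Longrightarrow> Top z \<in> X" using q4 by blast
  have p4: "\<And>z k. Mid z k \<in> X \<Longrightarrow>
        strict R (Mid z k) (Top z) \<and> (\<forall>z'. z' \<noteq> z \<and> Top z' \<in> X \<longrightarrow> \<not> strict R (Mid z k) (Top z'))"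
    using q5 by blast
  have p5: "\<And>s t. s\<in>X \<Longrightarrow> t\<in>X \<Longrightarrow> s \<noteq> t \<Longrightarrow> piB s = piB t \<Longrightarrow> pi s = pi t \<Longrightarrow> i {s, t} = {}"
    using q6 by blast
  have p6: "\<And>t s a. t\<in>X \<Longrightarrow> lev_succ a (pi t) \<Longrightarrow> strict R s t \<Longrightarrow>
        (\<exists>v\<in>X. pi v = a \<and> (s, v) \<in> R \<and> strict R v t)"
    using q7 by blast
  have p7a: "\<And>x y. x\<in>X \<Longrightarrow> y\<in>X \<Longrightarrow> x \<noteq> y \<Longrightarrow> i {x, y} \<subseteq> X \<and> finite (i {x, y})"
    using q8 by blast
  have p7b: "\<And>x y. strict R x y \<Longrightarrow> i {x, y} = {x}" using q9 by blast
  have p7c: "\<And>x y. x\<in>X \<Longrightarrow> y\<in>X \<Longrightarrow> (x, y) \<notin> R \<Longrightarrow> (y, x) \<notin> R \<Longrightarrow>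
        (\<forall>u\<in>X. ((u, x) \<in> R \<and> (u, y) \<in> R) \<longleftrightarrow> (\<exists>v\<in>i {x, y}. (u, v) \<in> R))
      \<and> ((\<exists>zx zy. piB x = B zx \<and> piB y = B zy \<and> zx \<noteq> zy \<and>
            pi x \<in> {LW1, LW1s} \<and> pi y \<in> {LW1, LW1s}) \<longrightarrow>
          (\<forall>v\<in>i {x, y}. \<forall>zx zy. piB x = B zx \<and> piB y = B zy \<longrightarrow>
              lev_less (pi v) (Lv (F {zx, zy}))))"
    using q10 by blast
  have nwt: "nw \<noteq> t" using tX nX by blast
  have Rup: "\<And>x. (t,x) \<in> R \<Longrightarrow> lev_less (pi nw) (pi x)"
  proof -
    fix x assume "(t,x) \<in> R"
    then have "t = x \<or> strict R t x" unfolding strict_def by blast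
    then show "lev_less (pi nw) (pi x)" using lt sl lev_less_trans by blast
  qed
  have nwtop: "\<And>z. nw \<noteq> Top z" using lt by (cases "pi t") auto
  have i'old: "\<And>S. S \<subseteq> X \<Longrightarrow> i' S = i S" unfolding i'_def by simp
  have i'new: "\<And>x. x \<in> X \<Longrightarrow> i' {nw,x} = (if (t,x) \<in> R then {nw} else {})"
  proof -
    fix x assume xX: "x \<in> X"
    have "\<not> {nw,x} \<subseteq> X" using nX by blast
    moreover have "(\<exists>x'. (t,x') \<in> R \<and> {nw,x} = {nw,x'}) \<longleftrightarrow> (t,x) \<in> R"
    proof
      assume "\<exists>x'. (t,x') \<in> R \<and> {nw,x} = {nw,x'}"
      then obtain x' where "(t,x') \<in> R" "{nw,x} = {nw,x'}" by blast
      moreover have "x' \<noteq> nw" using \<open>(t,x') \<in> R\<close> RX nX by blast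
      moreover have "x \<noteq> nw" using xX nX by blast
      ultimately show "(t,x) \<in> R" by (metis doubleton_eq_iff)
    qed blast
    ultimately show "i' {nw,x} = (if (t,x) \<in> R then {nw} else {})" unfolding i'_def using nX by simp
  qed
  have R'old: "\<And>x y. x \<in> X \<Longrightarrow> y \<in> X \<Longrightarrow> (x,y) \<in> R' \<longleftrightarrow> (x,y) \<in> R"
    unfolding R'_def using nX RX by blast
  have R'nw1: "\<And>x. x \<in> X \<Longrightarrow> (nw,x) \<in> R' \<longleftrightarrow> (t,x) \<in> R"
    unfolding R'_def using nX RX by blast
  have R'nw2: "\<And>x. (x,nw) \<in> R' \<longleftrightarrow> x = nw"
    unfolding R'_def using nX RX by blast
  have nwnw: "(nw,nw) \<in> R'" unfolding R'_def by blast
  have R'X: "R' \<subseteq> X' \<times> X'" unfolding R'_def X'_def using RX by blast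
  have strict_old: "\<And>x y. x \<noteq> nw \<Longrightarrow> strict R' x y \<longleftrightarrow> strict R x y"
    unfolding strict_def R'_def by blast

  have c1: "finite X'" unfolding X'_def using fin by simp
  have c2: "partial_order_on X' R'"
    unfolding partial_order_on_def preorder_on_def refl_on_def trans_def antisym_def
  proof (intro conjI ballI allI impI)
    show "R' \<subseteq> X' \<times> X'" by (rule R'X)
    show "\<And>x. x \<in> X' \<Longrightarrow> (x,x) \<in> R'" unfolding X'_def R'_def using refl by blast
    show "\<And>x y z. (x, y) \<in> R' \<Longrightarrow> (y, z) \<in> R' \<Longrightarrow> (x, z) \<in> R'"
      unfolding R'_def using tr nX RX by blast
    show "\<And>x y. (x, y) \<in> R' \<Longrightarrow> (y, x) \<in> R' \<Longrightarrow> x = y"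
      unfolding R'_def using an nX RX by blast
  qed
  have c3: "\<forall>x y. strict R' x y \<longrightarrow> lev_less (pi x) (pi y)"
  proof (intro allI impI)
    fix x y assume s: "strict R' x y"
    show "lev_less (pi x) (pi y)"
    proof (cases "x = nw")
      case True
      then have "(t,y) \<in> R" using s unfolding strict_def R'_def using nX RX by auto
      then show ?thesis using Rup True by blast
    next
      case False then show ?thesis using s strict_old sl by blast
    qed
  qed
  have c4: "\<forall>z. (\<exists>x\<in>X'. piB x = B z) \<longrightarrow> Top z \<in> X'"
  proof (intro allI impI)
    fix z assume "\<exists>x\<in>X'. piB x = B z"
    then obtain x where x: "x \<in> X'" "piB x = B z" by blast
    show "Top z \<in> X'"
    proof (cases "x = nw")
      case True
      then obtain k where "nw = Mid z k" using x nwtop by (cases nw) auto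
      then show ?thesis using mid tX unfolding X'_def by blast
    next
      case False then show ?thesis using x p3 unfolding X'_def by blast
    qed
  qed
  have c5: "\<forall>z k. Mid z k \<in> X' \<longrightarrow>
        strict R' (Mid z k) (Top z) \<and> (\<forall>z'. z' \<noteq> z \<and> Top z' \<in> X' \<longrightarrow> \<not> strict R' (Mid z k) (Top z'))"
  proof (intro allI impI)
    fix z k assume m: "Mid z k \<in> X'"
    show "strict R' (Mid z k) (Top z) \<and> (\<forall>z'. z' \<noteq> z \<and> Top z' \<in> X' \<longrightarrow> \<not> strict R' (Mid z k) (Top z'))"
    proof (cases "Mid z k = nw")
      case True
      then have tt: "t = Top z" using mid by metis
      have "(nw, Top z) \<in> R'" using R'nw1 refl tX tt by blast
      moreover have "\<not> strict R' nw (Top z')" if "z' \<noteq> z" "Top z' \<in> X'" for z'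
      proof
        assume "strict R' nw (Top z')"
        then have "(Top z, Top z') \<in> R" using tt R'nw1 nwtop that unfolding strict_def X'_def by blast
        then have "strict R (Top z) (Top z')" using that unfolding strict_def by blast
        then show False using sl by fastforce
      qed
      ultimately show ?thesis using True nwtop unfolding strict_def by metis
    next
      case False
      then have "Mid z k \<in> X" using m unfolding X'_def by blast
      then show ?thesis using p4 strict_old[OF False[symmetric, THEN not_sym]] nwtop unfolding X'_def
        by (metis False insert_iff)
    qed
  qed
  have c6: "\<forall>s\<in>X'. \<forall>t\<in>X'. s \<noteq> t \<and> piB s = piB t \<and> pi s = pi t \<longrightarrow> i' {s, t} = {}"
  proof (intro ballI impI)
    fix s u assume su: "s \<in> X'" "u \<in> X'" "s \<noteq> u \<and> piB s = piB u \<and> pi s = pi u"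
    show "i' {s,u} = {}"
    proof (cases "s = nw \<or> u = nw")
      case True
      then obtain x where x: "x \<in> X" "{s,u} = {nw,x}" "pi x = pi nw" using su unfolding X'_def by auto
      have "(t,x) \<notin> R" using Rup x lev_less_irr by metis
      then show ?thesis using i'new x by simp
    next
      case False
      then have "s \<in> X" "u \<in> X" using su unfolding X'_def by auto
      then show ?thesis using i'old p5 su by simp
    qed
  qed
  have c7: "\<forall>t\<in>X'. \<forall>s. \<forall>a. lev_succ a (pi t) \<and> strict R' s t \<longrightarrow>
        (\<exists>v\<in>X'. pi v = a \<and> (s, v) \<in> R' \<and> strict R' v t)"
  proof (intro ballI allI impI)
    fix u s a assume u: "u \<in> X'" and h: "lev_succ a (pi u) \<and> strict R' s u"
    have un: "u \<noteq> nw" using h R'nw2 unfolding strict_def by blast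
    then have uX: "u \<in> X" using u unfolding X'_def by blast
    show "\<exists>v\<in>X'. pi v = a \<and> (s, v) \<in> R' \<and> strict R' v u"
    proof (cases "s = nw")
      case False
      then have "strict R s u" using h strict_old by blast
      then obtain v where v: "v \<in> X" "pi v = a" "(s,v) \<in> R" "strict R v u" using p6 uX h by blast
      have "v \<noteq> nw" using v nX by blast
      then show ?thesis using v strict_old R'_def unfolding X'_def by blast
    next
      case True
      then have tu: "(t,u) \<in> R" using h R'nw1 uX unfolding strict_def by blast
      show ?thesis
      proof (cases "t = u")
        case True
        then have "a = pi nw" using succ h lev_succ_uniq by blast
        moreover have "(nw,nw) \<in> R'" unfolding R'_def by blast
        moreover have "strict R' nw u" using h \<open>s = nw\<close> by blast
        ultimately show ?thesis using \<open>s = nw\<close> unfolding X'_def by blast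
      next
        case False
        then have "strict R t u" using tu unfolding strict_def by blast
        then obtain v where v: "v \<in> X" "pi v = a" "(t,v) \<in> R" "strict R v u" using p6 uX h by blast
        have "v \<noteq> nw" using v nX by blast
        then show ?thesis using v strict_old R'nw1 \<open>s = nw\<close> unfolding X'_def by blast
      qed
    qed
  qed
  have c8: "\<forall>x\<in>X'. \<forall>y\<in>X'. x \<noteq> y \<longrightarrow> i' {x, y} \<subseteq> X' \<and> finite (i' {x, y})"
  proof (intro ballI impI)
    fix x y assume xy: "x \<in> X'" "y \<in> X'" "x \<noteq> y"
    show "i' {x, y} \<subseteq> X' \<and> finite (i' {x, y})"
    proof (cases "x = nw \<or> y = nw")
      case True
      then obtain w where "w \<in> X" "{x,y} = {nw,w}" using xy unfolding X'_def by auto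
      then show ?thesis using i'new unfolding X'_def by simp
    next
      case False
      then have xX: "x \<in> X" "y \<in> X" using xy unfolding X'_def by auto
      then show ?thesis using i'old[of "{x,y}"] p7a[OF xX] xy(3) unfolding X'_def by auto
    qed
  qed
  have c9: "\<forall>x y. strict R' x y \<longrightarrow> i' {x, y} = {x}"
  proof (intro allI impI)
    fix x y assume s: "strict R' x y"
    have yn: "y \<noteq> nw" using s R'nw2 unfolding strict_def by blast
    have yX: "y \<in> X" using s R'X yn unfolding strict_def X'_def by blast
    show "i' {x,y} = {x}"
    proof (cases "x = nw")
      case True
      then have "(t,y) \<in> R" using s R'nw1 yX unfolding strict_def by blast
      then show ?thesis using i'new yX True by simp
    next
      case False
      then have "strict R x y" using s strict_old by blast
      then have "x \<in> X" using RX unfolding strict_def by blast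
      then show ?thesis using i'old p7b \<open>strict R x y\<close> yX by simp
    qed
  qed
  have c10: "\<forall>x\<in>X'. \<forall>y\<in>X'. (x, y) \<notin> R' \<and> (y, x) \<notin> R' \<longrightarrow>
        (\<forall>u\<in>X'. ((u, x) \<in> R' \<and> (u, y) \<in> R') \<longleftrightarrow> (\<exists>v\<in>i' {x, y}. (u, v) \<in> R'))
      \<and> ((\<exists>zx zy. piB x = B zx \<and> piB y = B zy \<and> zx \<noteq> zy \<and>
            pi x \<in> {LW1, LW1s} \<and> pi y \<in> {LW1, LW1s}) \<longrightarrow>
          (\<forall>v\<in>i' {x, y}. \<forall>zx zy. piB x = B zx \<and> piB y = B zy \<longrightarrow>
              lev_less (pi v) (Lv (F {zx, zy}))))"
  proof (intro ballI impI)
    fix x y assume xy: "x \<in> X'" "y \<in> X'" "(x, y) \<notin> R' \<and> (y, x) \<notin> R'"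
    show "(\<forall>u\<in>X'. ((u, x) \<in> R' \<and> (u, y) \<in> R') \<longleftrightarrow> (\<exists>v\<in>i' {x, y}. (u, v) \<in> R'))
      \<and> ((\<exists>zx zy. piB x = B zx \<and> piB y = B zy \<and> zx \<noteq> zy \<and>
            pi x \<in> {LW1, LW1s} \<and> pi y \<in> {LW1, LW1s}) \<longrightarrow>
          (\<forall>v\<in>i' {x, y}. \<forall>zx zy. piB x = B zx \<and> piB y = B zy \<longrightarrow>
              lev_less (pi v) (Lv (F {zx, zy}))))"
    proof (cases "x = nw \<or> y = nw")
      case True
      then obtain w where w: "w \<in> X" "{x,y} = {nw,w}" "(nw,w) \<notin> R'" using xy nwnw unfolding X'_def by auto
      then have "(t,w) \<notin> R" using R'nw1 by blast
      then have e: "i' {x,y} = {}" using i'new w by simp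
      have "\<not> ((u, x) \<in> R' \<and> (u, y) \<in> R')" for u
        using w R'nw2 by (metis doubleton_eq_iff)
      then show ?thesis using e by simp
    next
      case False
      then have X: "x \<in> X" "y \<in> X" using xy unfolding X'_def by auto
      then have nr: "(x,y) \<notin> R" "(y,x) \<notin> R" using xy R'old by auto
      have e: "i' {x,y} = i {x,y}" using i'old X by simp
      have sub: "i {x,y} \<subseteq> X" using p7a X nr refl by blast
      have A: "\<forall>u\<in>X'. ((u, x) \<in> R' \<and> (u, y) \<in> R') \<longleftrightarrow> (\<exists>v\<in>i' {x, y}. (u, v) \<in> R')"
      proof
        fix u assume "u \<in> X'"
        show "((u, x) \<in> R' \<and> (u, y) \<in> R') \<longleftrightarrow> (\<exists>v\<in>i' {x, y}. (u, v) \<in> R')"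
        proof (cases "u = nw")
          case True
          have "((t, x) \<in> R \<and> (t, y) \<in> R) \<longleftrightarrow> (\<exists>v\<in>i {x, y}. (t, v) \<in> R)"
            using p7c[OF X nr] tX by blast
          moreover have "(\<exists>v\<in>i {x, y}. (t, v) \<in> R) \<longleftrightarrow> (\<exists>v\<in>i {x, y}. (nw, v) \<in> R')"
            using R'nw1 sub by blast
          ultimately show ?thesis using True R'nw1 X e by simp
        next
          case False
          then have uX: "u \<in> X" using \<open>u \<in> X'\<close> unfolding X'_def by blast
          have "((u, x) \<in> R \<and> (u, y) \<in> R) \<longleftrightarrow> (\<exists>v\<in>i {x, y}. (u, v) \<in> R)"
            using p7c[OF X nr] uX by blast
          moreover have "(\<exists>v\<in>i {x, y}. (u, v) \<in> R) \<longleftrightarrow> (\<exists>v\<in>i {x, y}. (u, v) \<in> R')"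
            using R'old sub uX by blast
          ultimately show ?thesis using R'old uX X e by simp
        qed
      qed
      show ?thesis unfolding e by (rule conjI[OF A[unfolded e] p7c[OF X nr, THEN conjunct2]])
    qed
  qed
  have inP': "inP F X' R' i'" unfolding inP_def
    using c1 c2 c3 c4 c5 c6 c7 c8 c9 c10 by (intro conjI) assumption+
  have le: "leP (X',R',i') (X,R,i)" unfolding leP_def
  proof (simp, intro conjI ballI impI)
    show "X \<subseteq> X'" unfolding X'_def by blast
    show "R = R' \<inter> X \<times> X" using R'old RX by auto
    show "\<And>x y. x \<in> X \<Longrightarrow> y \<in> X \<Longrightarrow> x \<noteq> y \<Longrightarrow> i' {x, y} = i {x, y}" using i'old by simp
  qed
  show ?thesis using inP' le R'nw1 by blast
qed
lemma iso:
  assumes P: "inP F X R i" and nX: "nw \<notin> X"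
    and nmid: "\<forall>z k. nw \<noteq> Mid z k"
  defines "X' \<equiv> insert nw X"
    and "R' \<equiv> R \<union> {(nw,nw)}"
    and "i' \<equiv> \<lambda>S. if S \<subseteq> X then i S else {}"
  shows "inP F X' R' i' \<and> leP (X',R',i') (X,R,i)"
proof -
  note Pc = P[unfolded inP_def]
  note q1 = Pc[THEN conjunct1]
  note q2 = Pc[THEN conjunct2, THEN conjunct1]
  note q3 = Pc[THEN conjunct2, THEN conjunct2, THEN conjunct1]
  note q4 = Pc[THEN conjunct2, THEN conjunct2, THEN conjunct2, THEN conjunct1]
  note q5 = Pc[THEN conjunct2, THEN conjunct2, THEN conjunct2, THEN conjunct2, THEN conjunct1]
  note q6 = Pc[THEN conjunct2, THEN conjunct2, THEN conjunct2, THEN conjunct2, THEN conjunct2, THEN conjunct1]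
  note q7 = Pc[THEN conjunct2, THEN conjunct2, THEN conjunct2, THEN conjunct2, THEN conjunct2, THEN conjunct2, THEN conjunct1]
  note q8 = Pc[THEN conjunct2, THEN conjunct2, THEN conjunct2, THEN conjunct2, THEN conjunct2, THEN conjunct2, THEN conjunct2, THEN conjunct1]
  note q9 = Pc[THEN conjunct2, THEN conjunct2, THEN conjunct2, THEN conjunct2, THEN conjunct2, THEN conjunct2, THEN conjunct2, THEN conjunct2, THEN conjunct1]
  note q10 = Pc[THEN conjunct2, THEN conjunct2, THEN conjunct2, THEN conjunct2, THEN conjunct2, THEN conjunct2, THEN conjunct2, THEN conjunct2, THEN conjunct2]
  have fin: "finite X" by (rule q1)
  have po: "partial_order_on X R" by (rule q2)
  have RX: "R \<subseteq> X \<times> X" using po unfolding partial_order_on_def preorder_on_def by blast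
  have refl: "\<And>x. x \<in> X \<Longrightarrow> (x,x) \<in> R" using po unfolding partial_order_on_def preorder_on_def refl_on_def by blast
  have tr: "\<And>x y z. (x,y) \<in> R \<Longrightarrow> (y,z) \<in> R \<Longrightarrow> (x,z) \<in> R" using po unfolding partial_order_on_def preorder_on_def trans_def by blast
  have an: "\<And>x y. (x,y) \<in> R \<Longrightarrow> (y,x) \<in> R \<Longrightarrow> x = y" using po unfolding partial_order_on_def antisym_def by blast
  have sl: "\<And>x y. strict R x y \<Longrightarrow> lev_less (pi x) (pi y)" using q3 by blast
  have p3: "\<And>z. (\<exists>x\<in>X. piB x = B z) \<Longrightarrow> Top z \<in> X" using q4 by blast
  have p4: "\<And>z k. Mid z k \<in> X \<Longrightarrow>
        strict R (Mid z k) (Top z) \<and> (\<forall>z'. z' \<noteq> z \<and> Top z' \<in> X \<longrightarrow> \<not> strict R (Mid z k) (Top z'))"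
    using q5 by blast
  have p5: "\<And>s t. s\<in>X \<Longrightarrow> t\<in>X \<Longrightarrow> s \<noteq> t \<Longrightarrow> piB s = piB t \<Longrightarrow> pi s = pi t \<Longrightarrow> i {s, t} = {}"
    using q6 by blast
  have p6: "\<And>t s a. t\<in>X \<Longrightarrow> lev_succ a (pi t) \<Longrightarrow> strict R s t \<Longrightarrow>
        (\<exists>v\<in>X. pi v = a \<and> (s, v) \<in> R \<and> strict R v t)"
    using q7 by blast
  have p7a: "\<And>x y. x\<in>X \<Longrightarrow> y\<in>X \<Longrightarrow> x \<noteq> y \<Longrightarrow> i {x, y} \<subseteq> X \<and> finite (i {x, y})"
    using q8 by blast
  have p7b: "\<And>x y. strict R x y \<Longrightarrow> i {x, y} = {x}" using q9 by blast
  have p7c: "\<And>x y. x\<in>X \<Longrightarrow> y\<in>X \<Longrightarrow> (x, y) \<notin> R \<Longrightarrow> (y, x) \<notin> R \<Longrightarrow>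
        (\<forall>u\<in>X. ((u, x) \<in> R \<and> (u, y) \<in> R) \<longleftrightarrow> (\<exists>v\<in>i {x, y}. (u, v) \<in> R))
      \<and> ((\<exists>zx zy. piB x = B zx \<and> piB y = B zy \<and> zx \<noteq> zy \<and>
            pi x \<in> {LW1, LW1s} \<and> pi y \<in> {LW1, LW1s}) \<longrightarrow>
          (\<forall>v\<in>i {x, y}. \<forall>zx zy. piB x = B zx \<and> piB y = B zy \<longrightarrow>
              lev_less (pi v) (Lv (F {zx, zy}))))"
    using q10 by blast
  have i'old: "\<And>S. S \<subseteq> X \<Longrightarrow> i' S = i S" unfolding i'_def by simp
  have i'new: "\<And>x. i' {nw,x} = {}" unfolding i'_def using nX by simp
  have R'old: "\<And>x y. x \<in> X \<Longrightarrow> y \<in> X \<Longrightarrow> (x,y) \<in> R' \<longleftrightarrow> (x,y) \<in> R"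
    unfolding R'_def using nX RX by blast
  have R'nw1: "\<And>x. (nw,x) \<in> R' \<longleftrightarrow> x = nw"
    unfolding R'_def using nX RX by blast
  have R'nw2: "\<And>x. (x,nw) \<in> R' \<longleftrightarrow> x = nw"
    unfolding R'_def using nX RX by blast
  have R'X: "R' \<subseteq> X' \<times> X'" unfolding R'_def X'_def using RX by blast
  have strict_old: "\<And>x y. strict R' x y \<longleftrightarrow> strict R x y"
    unfolding strict_def R'_def by blast
  have c1: "finite X'" unfolding X'_def using fin by simp
  have c2: "partial_order_on X' R'"
    unfolding partial_order_on_def preorder_on_def refl_on_def trans_def antisym_def
  proof (intro conjI ballI allI impI)
    show "R' \<subseteq> X' \<times> X'" by (rule R'X)
    show "\<And>x. x \<in> X' \<Longrightarrow> (x,x) \<in> R'" unfolding X'_def R'_def using refl by blast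
    show "\<And>x y z. (x, y) \<in> R' \<Longrightarrow> (y, z) \<in> R' \<Longrightarrow> (x, z) \<in> R'"
      unfolding R'_def using tr nX RX by blast
    show "\<And>x y. (x, y) \<in> R' \<Longrightarrow> (y, x) \<in> R' \<Longrightarrow> x = y"
      unfolding R'_def using an nX RX by blast
  qed
  have c3: "\<forall>x y. strict R' x y \<longrightarrow> lev_less (pi x) (pi y)"
    using strict_old sl by blast
  have c4: "\<forall>z. (\<exists>x\<in>X'. piB x = B z) \<longrightarrow> Top z \<in> X'"
  proof (intro allI impI)
    fix z assume "\<exists>x\<in>X'. piB x = B z"
    then obtain x where x: "x \<in> X'" "piB x = B z" by blast
    show "Top z \<in> X'"
    proof (cases "x = nw")
      case True
      then have "nw = Top z" using x nmid by (cases nw) auto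
      then show ?thesis unfolding X'_def by blast
    next
      case False then show ?thesis using x p3 unfolding X'_def by blast
    qed
  qed
  have c5: "\<forall>z k. Mid z k \<in> X' \<longrightarrow>
        strict R' (Mid z k) (Top z) \<and> (\<forall>z'. z' \<noteq> z \<and> Top z' \<in> X' \<longrightarrow> \<not> strict R' (Mid z k) (Top z'))"
  proof (intro allI impI)
    fix z k assume m: "Mid z k \<in> X'"
    then have mX: "Mid z k \<in> X" using nmid unfolding X'_def by auto
    have "\<not> strict R' (Mid z k) nw" using R'nw2 nmid unfolding strict_def by metis
    then show "strict R' (Mid z k) (Top z) \<and> (\<forall>z'. z' \<noteq> z \<and> Top z' \<in> X' \<longrightarrow> \<not> strict R' (Mid z k) (Top z'))"
      using p4[OF mX] strict_old unfolding X'_def by (metis insert_iff)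
  qed
  have c6: "\<forall>s\<in>X'. \<forall>t\<in>X'. s \<noteq> t \<and> piB s = piB t \<and> pi s = pi t \<longrightarrow> i' {s, t} = {}"
  proof (intro ballI impI)
    fix s u assume su: "s \<in> X'" "u \<in> X'" "s \<noteq> u \<and> piB s = piB u \<and> pi s = pi u"
    show "i' {s,u} = {}"
    proof (cases "s = nw \<or> u = nw")
      case True
      then show ?thesis using i'new by (metis insert_commute)
    next
      case False
      then have "s \<in> X" "u \<in> X" using su unfolding X'_def by auto
      then show ?thesis using i'old p5 su by simp
    qed
  qed
  have c7: "\<forall>t\<in>X'. \<forall>s. \<forall>a. lev_succ a (pi t) \<and> strict R' s t \<longrightarrow>
        (\<exists>v\<in>X'. pi v = a \<and> (s, v) \<in> R' \<and> strict R' v t)"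
  proof (intro ballI allI impI)
    fix u s a assume u: "u \<in> X'" and h: "lev_succ a (pi u) \<and> strict R' s u"
    have un: "u \<noteq> nw" using h R'nw2 unfolding strict_def by blast
    then have uX: "u \<in> X" using u unfolding X'_def by blast
    have "strict R s u" using h strict_old by blast
    then obtain v where v: "v \<in> X" "pi v = a" "(s,v) \<in> R" "strict R v u" using p6 uX h by blast
    then show "\<exists>v\<in>X'. pi v = a \<and> (s, v) \<in> R' \<and> strict R' v u"
      using strict_old unfolding X'_def R'_def by blast
  qed
  have c8: "\<forall>x\<in>X'. \<forall>y\<in>X'. x \<noteq> y \<longrightarrow> i' {x, y} \<subseteq> X' \<and> finite (i' {x, y})"
  proof (intro ballI impI)
    fix x y assume xy: "x \<in> X'" "y \<in> X'" "x \<noteq> y"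
    show "i' {x, y} \<subseteq> X' \<and> finite (i' {x, y})"
    proof (cases "x = nw \<or> y = nw")
      case True
      then show ?thesis using i'new by (metis empty_subsetI finite.emptyI insert_commute)
    next
      case False
      then have xX: "x \<in> X" "y \<in> X" using xy unfolding X'_def by auto
      then show ?thesis using i'old[of "{x,y}"] p7a[OF xX] xy(3) unfolding X'_def by auto
    qed
  qed
  have c9: "\<forall>x y. strict R' x y \<longrightarrow> i' {x, y} = {x}"
  proof (intro allI impI)
    fix x y assume s: "strict R' x y"
    then have "strict R x y" using strict_old by blast
    then have "x \<in> X" "y \<in> X" using RX unfolding strict_def by blast+
    then show "i' {x,y} = {x}" using i'old p7b \<open>strict R x y\<close> by simp
  qed
  have c10: "\<forall>x\<in>X'. \<forall>y\<in>X'. (x, y) \<notin> R' \<and> (y, x) \<notin> R' \<longrightarrow>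
        (\<forall>u\<in>X'. ((u, x) \<in> R' \<and> (u, y) \<in> R') \<longleftrightarrow> (\<exists>v\<in>i' {x, y}. (u, v) \<in> R'))
      \<and> ((\<exists>zx zy. piB x = B zx \<and> piB y = B zy \<and> zx \<noteq> zy \<and>
            pi x \<in> {LW1, LW1s} \<and> pi y \<in> {LW1, LW1s}) \<longrightarrow>
          (\<forall>v\<in>i' {x, y}. \<forall>zx zy. piB x = B zx \<and> piB y = B zy \<longrightarrow>
              lev_less (pi v) (Lv (F {zx, zy}))))"
  proof (intro ballI impI)
    fix x y assume xy: "x \<in> X'" "y \<in> X'" "(x, y) \<notin> R' \<and> (y, x) \<notin> R'"
    show "(\<forall>u\<in>X'. ((u, x) \<in> R' \<and> (u, y) \<in> R') \<longleftrightarrow> (\<exists>v\<in>i' {x, y}. (u, v) \<in> R'))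
      \<and> ((\<exists>zx zy. piB x = B zx \<and> piB y = B zy \<and> zx \<noteq> zy \<and>
            pi x \<in> {LW1, LW1s} \<and> pi y \<in> {LW1, LW1s}) \<longrightarrow>
          (\<forall>v\<in>i' {x, y}. \<forall>zx zy. piB x = B zx \<and> piB y = B zy \<longrightarrow>
              lev_less (pi v) (Lv (F {zx, zy}))))"
    proof (cases "x = nw \<or> y = nw")
      case True
      then have e: "i' {x,y} = {}" using i'new by (metis insert_commute)
      have "\<not> ((u, x) \<in> R' \<and> (u, y) \<in> R')" for u
        using True xy R'nw2 R'nw1 by metis
      then show ?thesis using e by simp
    next
      case False
      then have X: "x \<in> X" "y \<in> X" using xy unfolding X'_def by auto
      then have nr: "(x,y) \<notin> R" "(y,x) \<notin> R" using xy R'old by auto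
      have e: "i' {x,y} = i {x,y}" using i'old X by simp
      have sub: "i {x,y} \<subseteq> X" using p7a X nr refl by blast
      have A: "\<forall>u\<in>X'. ((u, x) \<in> R' \<and> (u, y) \<in> R') \<longleftrightarrow> (\<exists>v\<in>i' {x, y}. (u, v) \<in> R')"
      proof
        fix u assume "u \<in> X'"
        show "((u, x) \<in> R' \<and> (u, y) \<in> R') \<longleftrightarrow> (\<exists>v\<in>i' {x, y}. (u, v) \<in> R')"
        proof (cases "u = nw")
          case True
          have "nw \<notin> i {x,y}" using sub nX by blast
          then show ?thesis using True R'nw1 X e False by auto
        next
          case False
          then have uX: "u \<in> X" using \<open>u \<in> X'\<close> unfolding X'_def by blast
          have "((u, x) \<in> R \<and> (u, y) \<in> R) \<longleftrightarrow> (\<exists>v\<in>i {x, y}. (u, v) \<in> R)"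
            using p7c[OF X nr] uX by blast
          moreover have "(\<exists>v\<in>i {x, y}. (u, v) \<in> R) \<longleftrightarrow> (\<exists>v\<in>i {x, y}. (u, v) \<in> R')"
            using R'old sub uX by blast
          ultimately show ?thesis using R'old uX X e by simp
        qed
      qed
      show ?thesis unfolding e by (rule conjI[OF A[unfolded e] p7c[OF X nr, THEN conjunct2]])
    qed
  qed
  have inP': "inP F X' R' i'" unfolding inP_def
    using c1 c2 c3 c4 c5 c6 c7 c8 c9 c10 by (intro conjI) assumption+
  have le: "leP (X',R',i') (X,R,i)" unfolding leP_def
  proof (simp, intro conjI ballI impI)
    show "X \<subseteq> X'" unfolding X'_def by blast
    show "R = R' \<inter> X \<times> X" using R'old RX by auto
    show "\<And>x y. x \<in> X \<Longrightarrow> y \<in> X \<Longrightarrow> x \<noteq> y \<Longrightarrow> i' {x, y} = i {x, y}" using i'old by simp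
  qed
  show ?thesis using inP' le by blast
qed



lemma leP_trans:
  assumes "leP (X2,R2,i2) (X1,R1,i1)" "leP (X1,R1,i1) (X,R,i)"
  shows "leP (X2,R2,i2) (X,R,i)"
proof -
  have a: "X1 \<subseteq> X2" "R1 = R2 \<inter> X1 \<times> X1" "\<forall>x\<in>X1. \<forall>y\<in>X1. x \<noteq> y \<longrightarrow> i2 {x, y} = i1 {x, y}"
    using assms(1) unfolding leP_def by simp_all
  have b: "X \<subseteq> X1" "R = R1 \<inter> X \<times> X" "\<forall>x\<in>X. \<forall>y\<in>X. x \<noteq> y \<longrightarrow> i1 {x, y} = i {x, y}"
    using assms(2) unfolding leP_def by simp_all
  have "\<forall>x\<in>X. \<forall>y\<in>X. x \<noteq> y \<longrightarrow> i2 {x, y} = i {x, y}" using a(3) b(1,3) by blast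
  moreover have "R = R2 \<inter> X \<times> X" using a(2) b(1,2) by blast
  ultimately show ?thesis using a(1) b(1) unfolding leP_def by auto
qed

lemma fresh_nat: "finite (A::nat set) \<Longrightarrow> \<exists>m. n < m \<and> m \<notin> A"
proof -
  assume "finite A"
  then have "finite (A \<union> {..n})" by simp
  then obtain m where "m \<notin> A \<union> {..n}" using infinite_UNIV_nat ex_new_if_finite by blast
  then show ?thesis using not_le by blast
qed

lemma fresh_low: "finite X \<Longrightarrow> \<exists>m. n < m \<and> Low a m \<notin> X"
proof -
  assume f: "finite X"
  have "finite ((\<lambda>m. Low a m) -` X)" using f by (rule finite_vimageI) (simp add: inj_def)
  then obtain m where "n < m" "m \<notin> (\<lambda>m. Low a m) -` X" using fresh_nat by blast
  then show ?thesis by auto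
qed

lemma fresh_mid: "finite X \<Longrightarrow> \<exists>m. Mid z m \<notin> X"
proof -
  assume f: "finite X"
  have "finite ((\<lambda>m. Mid z m) -` X)" using f by (rule finite_vimageI) (simp add: inj_def)
  then obtain m where "0 < m" "m \<notin> (\<lambda>m. Mid z m) -` X" using fresh_nat by blast
  then show ?thesis by auto
qed

lemma inP_fin: "inP F X R i \<Longrightarrow> finite X" unfolding inP_def by (elim conjE)

definition concl where
  "concl F a n X R i t \<longleftrightarrow> (\<exists>X' R' i' s. inP F X' R' i' \<and> leP (X', R', i') (X, R, i) \<and>
           s \<in> X' - X \<and> (\<exists>m. s = Low a m \<and> n < m) \<and>
           (\<forall>x\<in>X. (s, x) \<in> R' \<longleftrightarrow> (t, x) \<in> R))"

lemma direct:
  assumes P: "inP F X R i" and tX: "t \<in> X" and lt: "lev_less (Lv a) (pi t)"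
    and succ: "lev_succ (Lv a) (pi t) \<or> (\<forall>d. \<not> lev_succ d (pi t))"
  shows "concl F a n X R i t"
proof -
  obtain m where m: "n < m" "Low a m \<notin> X" using fresh_low[OF inP_fin[OF P]] by blast
  from step[OF P tX m(2), simplified, OF lt succ] show ?thesis
    unfolding concl_def using m by blast
qed

lemma chain:
  assumes P: "inP F X R i" and tX: "t \<in> X" and yX: "y \<notin> X"
    and lt: "lev_less (pi y) (pi t)" and succ: "lev_succ (pi y) (pi t)"
    and mid: "\<forall>z k. y = Mid z k \<longrightarrow> t = Top z"
    and IH: "\<And>X1 R1 i1. inP F X1 R1 i1 \<Longrightarrow> y \<in> X1 \<Longrightarrow> concl F a n X1 R1 i1 y"
  shows "concl F a n X R i t"
proof -
  obtain X1 R1 i1 where p1: "inP F X1 R1 i1" "leP (X1,R1,i1) (X,R,i)" "\<forall>x\<in>X. (y,x) \<in> R1 \<longleftrightarrow> (t,x) \<in> R"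
    "y \<in> X1"
    using step[OF P tX yX lt] succ mid by blast
  have XX1: "X \<subseteq> X1" using p1(2) unfolding leP_def by simp
  obtain X2 R2 i2 s where p2: "inP F X2 R2 i2" "leP (X2,R2,i2) (X1,R1,i1)" "s \<in> X2 - X1"
    "\<exists>m. s = Low a m \<and> n < m" "\<forall>x\<in>X1. (s, x) \<in> R2 \<longleftrightarrow> (y, x) \<in> R1"
    using IH[OF p1(1) p1(4)] unfolding concl_def by blast
  show ?thesis unfolding concl_def
    apply (rule exI[of _ X2], rule exI[of _ R2], rule exI[of _ i2], rule exI[of _ s])
    using p2 p1 XX1 leP_trans by blast
qed

lemma bLv:
  fixes a :: "'w::wellorder"
  shows "\<forall>X R i (t :: ('w,'k) node). inP F X R i \<and> t \<in> X \<and> pi t = Lv b \<and> a < b \<longrightarrow> concl F a n X R i t"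
proof (induction b rule: less_induct)
  case (less b)
  show ?case
  proof (intro allI impI, elim conjE)
    fix X R i and t :: "('w,'k) node"
    assume P: "inP F X R i" and tX: "t \<in> X" and pt: "pi t = Lv b" and ab: "a < b"
    have lt: "lev_less (Lv a) (pi t)" using pt ab by simp
    show "concl F a n X R i t"
    proof (cases "\<exists>c. lev_succ (Lv c) (Lv b)")
      case True
      then obtain c where c: "c < b" "\<not> (\<exists>d. c < d \<and> d < b)" by auto
      have "a \<le> c" using c ab not_le by blast
      show ?thesis
      proof (cases "a = c")
        case True
        then show ?thesis using direct[OF P tX lt] c pt by simp
      next
        case False
        then have ac: "a < c" using \<open>a \<le> c\<close> by simp
        obtain m where m: "0 < m" "Low c m \<notin> X" using fresh_low[OF inP_fin[OF P]] by blast
        show ?thesis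
        proof (rule chain[OF P tX m(2)])
          show "lev_less (pi (Low c m)) (pi t)" using pt c by simp
          show "lev_succ (pi (Low c m)) (pi t)" using pt c by simp
          show "\<forall>z k. Low c m = Mid z k \<longrightarrow> t = Top z" by simp
          fix X1 R1 i1 assume "inP F X1 R1 i1" "Low c m \<in> X1"
          then show "concl F a n X1 R1 i1 (Low c m)" using less[OF c(1)] ac by simp
        qed
      qed
    next
      case False
      have "\<forall>d. \<not> lev_succ d (pi t)"
      proof
        fix d show "\<not> lev_succ d (pi t)" using False pt by (cases d) auto
      qed
      then show ?thesis using direct[OF P tX lt] by blast
    qed
  qed
qed

lemma bW1:
  assumes P: "inP F X R i" and tX: "t \<in> X" and pt: "pi t = LW1"
  shows "concl F a n X R i t"
proof -
  have "\<forall>d. \<not> lev_succ d (pi t)"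
  proof
    fix d show "\<not> lev_succ d (pi t)" using pt by (cases d) auto
  qed
  then show ?thesis using direct[OF P tX] pt by simp
qed

lemma bW1s:
  assumes P: "inP F X R i" and tX: "t \<in> X" and pt: "pi t = LW1s"
  shows "concl F a n X R i t"
proof -
  obtain z where tz: "t = Top z" using pt by (cases t) auto
  obtain m where m: "Mid z m \<notin> X" using fresh_mid[OF inP_fin[OF P]] by blast
  show ?thesis
  proof (rule chain[OF P tX m])
    show "lev_less (pi (Mid z m)) (pi t)" using pt by simp
    show "lev_succ (pi (Mid z m)) (pi t)" using pt by simp
    show "\<forall>z' k. Mid z m = Mid z' k \<longrightarrow> t = Top z'" using tz by simp
    fix X1 R1 i1 assume "inP F X1 R1 i1" "Mid z m \<in> X1"
    then show "concl F a n X1 R1 i1 (Mid z m)" by (rule bW1) simp_all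
  qed
qed

lemma iso_ex:
  assumes "inP F X R i" "nw \<notin> X" "\<forall>z k. nw \<noteq> Mid z k"
  shows "\<exists>X' R' i'. inP F X' R' i' \<and> leP (X', R', i') (X, R, i) \<and> X' = insert nw X"
proof -
  note h = iso[OF assms]
  show ?thesis
    apply (rule exI, rule exI, rule exI, rule conjI, rule h[THEN conjunct1], rule conjI, rule h[THEN conjunct2])
    by simp
qed

lemma step_ex:
  assumes P: "inP F X R i" and tX: "t \<in> X" and nX: "nw \<notin> X"
    and lt: "lev_less (pi nw) (pi t)"
    and succ: "lev_succ (pi nw) (pi t) \<or> (\<forall>d. \<not> lev_succ d (pi t))"
    and mid: "\<forall>z k. nw = Mid z k \<longrightarrow> t = Top z"
  shows "\<exists>X' R' i'. inP F X' R' i' \<and> leP (X', R', i') (X, R, i) \<and> nw \<in> X'"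
proof -
  note h = step[OF assms]
  show ?thesis
    apply (rule exI, rule exI, rule exI, rule conjI, rule h[THEN conjunct1], rule conjI, rule h[THEN conjunct2, THEN conjunct1])
    by simp
qed

theorem lemma3p8:
  fixes F :: "'k set \<Rightarrow> 'w::wellorder"
  assumes w_uncountable: "\<not> countable (UNIV :: 'w set)"
    and w_segments: "\<forall>a::'w. countable {b. b < a}"
    and lambda_ge_omega3:
      "(cardSuc (cardSuc (cardSuc natLeq)), card_of (UNIV :: 'k set)) \<in> ordLeq"
  shows
    "(\<forall>X R i (t :: ('w, 'k) node). inP F X R i \<and> t \<notin> X \<longrightarrow>
        (\<exists>X' R' i'. inP F X' R' i' \<and> leP (X', R', i') (X, R, i) \<and> t \<in> X'))
   \<and> (\<forall>X R i (t :: ('w, 'k) node) (a :: 'w) (n :: nat).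
        inP F X R i \<and> t \<in> X \<and> lev_less (Lv a) (pi t) \<longrightarrow>
        (\<exists>X' R' i' s. inP F X' R' i' \<and> leP (X', R', i') (X, R, i) \<and>
           s \<in> X' - X \<and> (\<exists>m. s = Low a m \<and> n < m) \<and>
           (\<forall>x\<in>X. (s, x) \<in> R' \<longleftrightarrow> (t, x) \<in> R)))"
proof (intro conjI allI impI; elim conjE)
  fix X R i and t :: "('w,'k) node"
  assume P: "inP F X R i" and tX: "t \<notin> X"
  show "\<exists>X' R' i'. inP F X' R' i' \<and> leP (X', R', i') (X, R, i) \<and> t \<in> X'"
  proof (cases "\<exists>z k. t = Mid z k")
    case False
    then have nm: "\<forall>z k. t \<noteq> Mid z k" by blast
    show ?thesis using iso_ex[OF P tX nm] by blast
  next
    case True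
    then obtain z k where tz: "t = Mid z k" by blast
    have m: "\<forall>z' k'. t = Mid z' k' \<longrightarrow> Top z = Top z'" using tz by simp
    have l1: "lev_less (pi t) (pi (Top z))" using tz by simp
    have l2: "lev_succ (pi t) (pi (Top z)) \<or> (\<forall>d. \<not> lev_succ d (pi (Top z)))" using tz by simp
    show ?thesis
    proof (cases "Top z \<in> X")
      case True
      show ?thesis by (rule step_ex[OF P True tX l1 l2 m])
    next
      case False
      have nm: "\<forall>z' k'. Top z \<noteq> Mid z' k'" by simp
      obtain X1' R1' i1' where p1: "inP F X1' R1' i1'" "leP (X1',R1',i1') (X,R,i)" "X1' = insert (Top z) X"
        using iso_ex[OF P False nm] by blast
      have p1': "Top z \<in> X1'" "t \<notin> X1'" using p1(3) tX tz by auto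
      obtain X2 R2 i2 where p2: "inP F X2 R2 i2" "leP (X2,R2,i2) (X1',R1',i1')" "t \<in> X2"
        using step_ex[OF p1(1) p1'(1) p1'(2) l1 l2 m] by blast
      show ?thesis using p2 p1(2) leP_trans by blast
    qed
  qed
next
  fix X R i and t :: "('w,'k) node" and a :: 'w and n :: nat
  assume P: "inP F X R i" and tX: "t \<in> X" and lt: "lev_less (Lv a) (pi t)"
  have "concl F a n X R i t"
  proof (cases "pi t")
    case (Lv b)
    then have ab: "a < b" using lt by simp
    show ?thesis using bLv[where F=F and a=a and n=n and b=b] P tX Lv ab by blast
  next
    case LW1 then show ?thesis using bW1 P tX by blast
  next
    case LW1s then show ?thesis using bW1s P tX by blast
  qed
  then show "\<exists>X' R' i' s. inP F X' R' i' \<and> leP (X', R', i') (X, R, i) \<and>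
           s \<in> X' - X \<and> (\<exists>m. s = Low a m \<and> n < m) \<and>
           (\<forall>x\<in>X. (s, x) \<in> R' \<longleftrightarrow> (t, x) \<in> R)" unfolding concl_def .
qed

end
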